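(* Let $\mathbb{K}$ be a non-Archimedean valued field, $G$ a compactly generated topological group, and $E$ a normed $\mathbb{K}[G]$-module. Then every 1-quasicocycle $f : G \to E$ is bounded.
   Context: A non-Archimedean valued field is a field with an absolute value satisfying the ultrametric inequality. A normed $\mathbb{K}$-vector space has a norm satisfying $\|x\|=0$ iff $x=0$, $\|x+y\|\le\max\{\|x\|,\|y\|\}$, $\|\alpha x\|=|\alpha|_\mathbb{K}\|x\|$; a normed $\mathbb{K}[G]$-module is one on which $G$ acts by linear isometries. A 1-quasicocycle is a continuous map $f:G\to E$ such that $\delta^1 f(g,h)=g\cdot f(h)-f(gh)+f(g)$ is bounded on $G\times G$. *)

theory Defs
  imports "HOL-Analysis.Analysis" "HOL-Algebra.Generated_Groups"
begin

definition nonarch_abs :: "('k::field \<Rightarrow> real) \<Rightarrow> bool" where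
  "nonarch_abs av \<longleftrightarrow>
     (\<forall>x. av x \<ge> 0) \<and> (\<forall>x. av x = 0 \<longleftrightarrow> x = 0) \<and>
     (\<forall>x y. av (x * y) = av x * av y) \<and>
     (\<forall>x y. av (x + y) \<le> max (av x) (av y))"

definition topological_group :: "('g, 'b) monoid_scheme \<Rightarrow> 'g topology \<Rightarrow> bool" where
  "topological_group G T \<longleftrightarrow> group G \<and> topspace T = carrier G \<and>
     continuous_map (prod_topology T T) T (\<lambda>(x, y). x \<otimes>\<^bsub>G\<^esub> y) \<and>
     continuous_map T T (\<lambda>x. inv\<^bsub>G\<^esub> x)"

definition compactly_generated :: "('g, 'b) monoid_scheme \<Rightarrow> 'g topology \<Rightarrow> bool" where
  "compactly_generated G T \<longleftrightarrow>
     (\<exists>K. K \<subseteq> carrier G \<and> compactin T K \<and> generate G K = carrier G)"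

definition nonarch_normed_space ::
    "('k::field \<Rightarrow> real) \<Rightarrow> ('k \<Rightarrow> 'e::ab_group_add \<Rightarrow> 'e) \<Rightarrow> ('e \<Rightarrow> real) \<Rightarrow> bool" where
  "nonarch_normed_space av smul nrm \<longleftrightarrow>
     nonarch_abs av \<and> vector_space smul \<and>
     (\<forall>x. nrm x = 0 \<longleftrightarrow> x = 0) \<and>
     (\<forall>x y. nrm (x + y) \<le> max (nrm x) (nrm y)) \<and>
     (\<forall>a x. nrm (smul a x) = av a * nrm x)"

definition normed_KG_module ::
    "('k::field \<Rightarrow> real) \<Rightarrow> ('k \<Rightarrow> 'e::ab_group_add \<Rightarrow> 'e) \<Rightarrow> ('e \<Rightarrow> real)
     \<Rightarrow> ('g, 'b) monoid_scheme \<Rightarrow> ('g \<Rightarrow> 'e \<Rightarrow> 'e) \<Rightarrow> bool" where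
  "normed_KG_module av smul nrm G act \<longleftrightarrow>
     nonarch_normed_space av smul nrm \<and> group G \<and>
     (\<forall>g\<in>carrier G. Vector_Spaces.linear smul smul (act g)) \<and>
     (\<forall>g\<in>carrier G. \<forall>x. nrm (act g x) = nrm x) \<and>
     (\<forall>x. act \<one>\<^bsub>G\<^esub> x = x) \<and>
     (\<forall>g\<in>carrier G. \<forall>h\<in>carrier G. \<forall>x. act (g \<otimes>\<^bsub>G\<^esub> h) x = act g (act h x))"

definition continuous_to_normed ::
    "'g topology \<Rightarrow> ('e::ab_group_add \<Rightarrow> real) \<Rightarrow> ('g \<Rightarrow> 'e) \<Rightarrow> bool" where
  "continuous_to_normed T nrm f \<longleftrightarrow>
     (\<forall>g\<in>topspace T. \<forall>e>0. \<exists>U. openin T U \<and> g \<in> U \<and> (\<forall>h\<in>U. nrm (f h - f g) < e))"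

definition quasicocycle1 ::
    "('g, 'b) monoid_scheme \<Rightarrow> 'g topology \<Rightarrow> ('e::ab_group_add \<Rightarrow> real)
     \<Rightarrow> ('g \<Rightarrow> 'e \<Rightarrow> 'e) \<Rightarrow> ('g \<Rightarrow> 'e) \<Rightarrow> bool" where
  "quasicocycle1 G T nrm act f \<longleftrightarrow>
     continuous_to_normed T nrm f \<and>
     (\<exists>C. \<forall>g\<in>carrier G. \<forall>h\<in>carrier G.
        nrm (act g (f h) - f (g \<otimes>\<^bsub>G\<^esub> h) + f g) \<le> C)"

end

theory Submission
  imports Defs
begin

theorem proposition8p6:
  fixes av :: "'k::field \<Rightarrow> real"
    and smul :: "'k \<Rightarrow> 'e::ab_group_add \<Rightarrow> 'e"
    and nrm :: "'e \<Rightarrow> real"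
    and G :: "('g, 'b) monoid_scheme"
    and T :: "'g topology"
    and act :: "'g \<Rightarrow> 'e \<Rightarrow> 'e"
    and f :: "'g \<Rightarrow> 'e"
  assumes "nonarch_abs av"
    and "topological_group G T"
    and "compactly_generated G T"
    and "normed_KG_module av smul nrm G act"
    and "quasicocycle1 G T nrm act f"
  shows "\<exists>B. \<forall>g\<in>carrier G. nrm (f g) \<le> B"
proof -
  have NS: "nonarch_normed_space av smul nrm" and GG: "group G"
    and iso: "\<And>g x. g \<in> carrier G \<Longrightarrow> nrm (act g x) = nrm x"
    and act1: "\<And>x. act \<one>\<^bsub>G\<^esub> x = x"
    using assms(4) unfolding normed_KG_module_def by auto
  have VS: "vector_space smul" and ultra: "\<And>x y. nrm (x + y) \<le> max (nrm x) (nrm y)"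
    and nsc: "\<And>a x. nrm (smul a x) = av a * nrm x"
    using NS unfolding nonarch_normed_space_def by auto
  have AV: "\<And>x. av x \<ge> 0" "\<And>x. av x = 0 \<longleftrightarrow> x = 0" "\<And>x y. av (x * y) = av x * av y"
    using assms(1) unfolding nonarch_abs_def by auto
  have av1: "av 1 = 1"
  proof -
    have "av 1 = av 1 * av 1" using AV(3)[of 1 1] by simp
    moreover have "av 1 \<noteq> 0" using AV(2)[of 1] by simp
    ultimately show ?thesis by (metis mult_cancel_left1)
  qed
  have avm1: "av (-1) = 1"
  proof -
    have "av (-1) * av (-1) = 1" using AV(3)[of "-1" "-1"] av1 by simp
    moreover have "av (-1) \<ge> 0" using AV(1) by simp
    ultimately show ?thesis
      by (metis abs_of_nonneg abs_mult_self_eq abs_one real_sqrt_abs2 real_sqrt_one)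
  qed
  have nneg: "\<And>x. nrm (- x) = nrm x"
  proof -
    fix x
    have MS: "module smul" using VS module_iff_vector_space by blast
    have "smul (-1) x = - x" using module.scale_minus_left[OF MS, of 1 x]
      module.scale_one[OF MS, of x] by simp
    then show "nrm (- x) = nrm x" using nsc[of "-1" x] avm1 by simp
  qed
  have ultra3: "\<And>a b c. nrm (a + b - c) \<le> max (nrm a) (max (nrm b) (nrm c))"
  proof -
    fix a b c
    have "nrm (a + b - c) \<le> max (nrm (a+b)) (nrm (-c))"
      using ultra[of "a+b" "-c"] by simp
    then show "nrm (a + b - c) \<le> max (nrm a) (max (nrm b) (nrm c))"
      using ultra[of a b] nneg[of c] by linarith
  qed
  have cont: "continuous_to_normed T nrm f"
    using assms(5) unfolding quasicocycle1_def by auto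
  obtain C where C: "\<And>g h. g \<in> carrier G \<Longrightarrow> h \<in> carrier G \<Longrightarrow>
      nrm (act g (f h) - f (g \<otimes>\<^bsub>G\<^esub> h) + f g) \<le> C"
    using assms(5) unfolding quasicocycle1_def by auto
  have top: "topspace T = carrier G" using assms(2) unfolding topological_group_def by auto
  obtain K where K: "K \<subseteq> carrier G" "compactin T K" "generate G K = carrier G"
    using assms(3) unfolding compactly_generated_def by auto
  have one: "\<one>\<^bsub>G\<^esub> \<in> carrier G" using GG by (simp add: group.is_monoid monoid.one_closed)
  have f1: "nrm (f \<one>\<^bsub>G\<^esub>) \<le> C"
    using C[OF one one] act1 GG by (simp add: group.is_monoid monoid.l_one)
  have "\<forall>g\<in>K. \<exists>U. openin T U \<and> g \<in> U \<and> (\<forall>h\<in>U. nrm (f h - f g) < 1)"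
    using cont K(1) top unfolding continuous_to_normed_def by auto
  then obtain U where U: "\<And>g. g \<in> K \<Longrightarrow> openin T (U g) \<and> g \<in> U g \<and> (\<forall>h\<in>U g. nrm (f h - f g) < 1)"
    by metis
  have "\<exists>F. finite F \<and> F \<subseteq> U ` K \<and> K \<subseteq> \<Union>F"
    using K(2) U unfolding compactin_def by (metis (no_types, lifting) UN_I image_iff subsetI)
  then obtain F where F: "finite F" "F \<subseteq> U ` K" "K \<subseteq> \<Union>F" by blast
  then obtain K' where K': "K' \<subseteq> K" "finite K'" "F = U ` K'"
    by (meson finite_subset_image)
  define M where "M = 1 + (\<Sum>g\<in>K'. \<bar>nrm (f g)\<bar>)"
  have fK: "nrm (f h) \<le> M" if hK: "h \<in> K" for h
  proof -
    obtain g where g: "g \<in> K'" "h \<in> U g" using F(3) K'(3) hK by blast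
    have gK: "g \<in> K" using g K'(1) by auto
    have "nrm (f h) \<le> max (nrm (f h - f g)) (nrm (f g))"
      using ultra[of "f h - f g" "f g"] by simp
    moreover have "nrm (f h - f g) < 1" using U[OF gK] g by auto
    moreover have "\<bar>nrm (f g)\<bar> \<le> (\<Sum>g\<in>K'. \<bar>nrm (f g)\<bar>)"
      using g(1) K'(2) by (intro member_le_sum) auto
    moreover have "0 \<le> (\<Sum>g\<in>K'. \<bar>nrm (f g)\<bar>)" by (simp add: sum_nonneg)
    ultimately show ?thesis unfolding M_def by linarith
  qed
  define B where "B = max C M"
  have "nrm (f x) \<le> B" if "x \<in> generate G K" for x
    using that
  proof (induction x rule: generate.induct)
    case one
    then show ?case using f1 B_def by simp
  next
    case (incl h)
    then show ?case using fK B_def by fastforce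
  next
    case (inv h)
    have h: "h \<in> carrier G" using inv K(1) by auto
    have ih: "inv\<^bsub>G\<^esub> h \<in> carrier G" using h GG by (simp add: group.r_inv group.inv_closed)
    have hh: "h \<otimes>\<^bsub>G\<^esub> inv\<^bsub>G\<^esub> h = \<one>\<^bsub>G\<^esub>" using h GG by (simp add: group.r_inv group.inv_closed)
    define d where "d = act h (f (inv\<^bsub>G\<^esub> h)) - f \<one>\<^bsub>G\<^esub> + f h"
    have d: "nrm d \<le> C" using C[OF h ih] hh unfolding d_def by simp
    have "act h (f (inv\<^bsub>G\<^esub> h)) = d + f \<one>\<^bsub>G\<^esub> - f h" unfolding d_def by simp
    then have "nrm (f (inv\<^bsub>G\<^esub> h)) = nrm (d + f \<one>\<^bsub>G\<^esub> - f h)" using iso[OF h] by metis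
    also have "\<dots> \<le> max (nrm d) (max (nrm (f \<one>\<^bsub>G\<^esub>)) (nrm (f h)))" by (rule ultra3)
    finally show ?case using d f1 fK[OF inv] B_def by linarith
  next
    case (eng h1 h2)
    have h1: "h1 \<in> carrier G" and h2: "h2 \<in> carrier G" using eng K(3) by auto
    define d where "d = act h1 (f h2) - f (h1 \<otimes>\<^bsub>G\<^esub> h2) + f h1"
    have d: "nrm d \<le> C" using C[OF h1 h2] unfolding d_def by simp
    have "f (h1 \<otimes>\<^bsub>G\<^esub> h2) = act h1 (f h2) + f h1 - d" unfolding d_def by simp
    then have "nrm (f (h1 \<otimes>\<^bsub>G\<^esub> h2)) \<le> max (nrm (act h1 (f h2))) (max (nrm (f h1)) (nrm d))"
      using ultra3 by metis
    then show ?case using iso[OF h1] d eng.IH B_def by simp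
  qed
  then show ?thesis using K(3) by auto
qed

end
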